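(* Let $\sigma>0$, let $K_G\in\mathbb{R}^{m\times m}$ be a symmetric positive semidefinite matrix, let $W\in\mathbb{R}^{n\times m}$, and let $\mathbf{y}\in\mathbb{R}^n$. For every $\mathbf{x}\in\mathbb{R}^d$ let $\mathbf{w}_{\mathbf{x}}\in\mathbb{R}^m$ be a given vector. Define $\tilde K_X = W K_G W^T$, $\tilde{\mathbf{z}} = (\tilde K_X+\sigma^2 I)^{-1}\mathbf{y}$, $\tilde{\mathbf{k}}_{\mathbf{x}} = W K_G \mathbf{w}_{\mathbf{x}}$ (the SKI quantities), and $\bar{\mathbf{z}} = (K_G W^TW+\sigma^2 I)^{-1}K_G W^T\mathbf{y}$, $\bar C = \sigma^2 (K_GW^TW+\sigma^2 I)^{-1}K_G$ (the GSGP quantities). Then for all $\mathbf{x},\mathbf{x}'\in\mathbb{R}^d$: (i) (mean) $\mathbf{w}_{\mathbf{x}}^T K_G W^T\tilde{\mathbf{z}} = \mathbf{w}_{\mathbf{x}}^T\bar{\mathbf{z}}$; (ii) (covariance) $\mathbf{w}_{\mathbf{x}}^T K_G\mathbf{w}_{\mathbf{x}'} - \tilde{\mathbf{k}}_{\mathbf{x}}^T(\tilde K_X+\sigma^2 I)^{-1}\tilde{\mathbf{k}}_{\mathbf{x}'} = \mathbf{w}_{\mathbf{x}}^T\bar C\,\mathbf{w}_{\mathbf{x}'}$; (iii) (log likelihood) $-\tfrac12\big[\log\det(\tilde K_X+\sigma^2 I)+\mathbf{y}^T\tilde{\mathbf{z}}+n\log(2\pi)\big] = -\tfrac12\big[\log\det(K_GW^TW+\sigma^2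 I)+\tfrac{\mathbf{y}^T(\mathbf{y}-W\bar{\mathbf{z}})}{\sigma^2}+c\big]$, where $c = n\log(2\pi)+(n-m)\log\sigma^2$. In words: the SKI approximate inference expressions for posterior mean, posterior covariance and log likelihood coincide with the exact grid-structured GP (GSGP) inference expressions.
   Context: Setting: Gaussian process regression with data $\mathbf{x}_1,\dots,\mathbf{x}_n\in\mathbb{R}^d$, responses $\mathbf{y}\in\mathbb{R}^n$ and noise variance $\sigma^2$. $G=\{\mathbf{g}_1,\dots,\mathbf{g}_m\}\subseteq\mathbb{R}^d$ is a set of grid points, $k$ a positive-definite kernel, and $K_G=[k(\mathbf{g}_i,\mathbf{g}_j)]_{i,j}$. For $\mathbf{x}\in\mathbb{R}^d$, $\mathbf{w}_{\mathbf{x}}\in\mathbb{R}^m$ is a vector of interpolation weights from the grid to $\mathbf{x}$, and $W\in\mathbb{R}^{n\times m}$ has $i$-th row $\mathbf{w}_{\mathbf{x}_i}^T$. The SKI approximation replaces the kernel matrix by $WK_GW^T$; the grid-structured GP is $\boldsymbol\theta\sim\mathcal N(0,K_G)$, $f(\mathbf{x})=\mathbf{w}_{\mathbf{x}}^T\boldsymbol\theta$, observed with i.i.d. $\mathcal N(0,\sigma^2)$ noise; $\bar{\mathbf z}$ and $\bar C$ are the posterior mean and covariance of $\boldsymbol\theta$. *)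

theory Defs
  imports "HOL-Analysis.Analysis"
begin

definition sym_psd :: "real^'m^'m \<Rightarrow> bool" where
  "sym_psd K \<longleftrightarrow> transpose K = K \<and> (\<forall>v. 0 \<le> v \<bullet> (K *v v))"

end

theory Submission imports "Jordan_Normal_Form.Determinant" Defs begin

definition enm :: "nat \<Rightarrow> 'a::finite" where
  "enm = (SOME f. bij_betw f {0..<CARD('a)} (UNIV::'a set))"

lemma enm_bij: "bij_betw (enm :: nat \<Rightarrow> 'a::finite) {0..<CARD('a)} UNIV"
proof -
  have "\<exists>f. bij_betw f {0..<CARD('a)} (UNIV::'a set)"
    using ex_bij_betw_nat_finite[of "UNIV::'a set"] by simp
  then show ?thesis unfolding enm_def by (rule someI_ex)
qed

lemma enm_inj: "i < CARD('a) \<Longrightarrow> j < CARD('a) \<Longrightarrow> (enm i = (enm j :: 'a::finite)) = (i = j)"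
  using enm_bij[where 'a='a] unfolding bij_betw_def inj_on_def by auto

definition toJ :: "'a::comm_ring_1^'c::finite^'r::finite \<Rightarrow> 'a Matrix.mat" where
  "toJ A = Matrix.mat CARD('r) CARD('c) (\<lambda>(i,j). A $ enm i $ enm j)"

lemma toJ_carrier: "toJ (A::'a::comm_ring_1^'c::finite^'r::finite) \<in> carrier_mat CARD('r) CARD('c)"
  unfolding toJ_def by simp

lemma toJ_mult: "toJ ((A::'a::comm_ring_1^'k::finite^'r::finite) ** (B::'a^'c::finite^'k)) = toJ A * toJ B"
proof (rule eq_matI)
  fix i j assume i: "i < dim_row (toJ A * toJ B)" and j: "j < dim_col (toJ A * toJ B)"
  then have i': "i < CARD('r)" and j': "j < CARD('c)" by (auto simp: toJ_def)
  have "(toJ A * toJ B) $$ (i,j) = (\<Sum>k\<in>{0..<CARD('k)}. A $ enm i $ enm k * B $ enm k $ enm j)"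
    using i' j' by (simp add: toJ_def scalar_prod_def)
  also have "\<dots> = (\<Sum>k\<in>UNIV. A $ enm i $ k * B $ k $ enm j)"
    by (rule sum.reindex_bij_betw[OF enm_bij])
  finally show "toJ (A ** B) $$ (i, j) = (toJ A * toJ B) $$ (i, j)"
    using i' j' by (simp add: toJ_def matrix_matrix_mult_def)
qed (auto simp: toJ_def)

lemma toJ_add: "toJ ((A::'a::comm_ring_1^'c::finite^'r::finite) + B) = toJ A + toJ B"
  by (rule eq_matI) (auto simp: toJ_def)

lemma toJ_scaleR: "toJ (c *\<^sub>R (A::real^'c::finite^'r::finite)) = c \<cdot>\<^sub>m toJ A"
  by (rule eq_matI) (auto simp: toJ_def)

lemma toJ_one: "toJ (Finite_Cartesian_Product.mat 1 :: 'a::comm_ring_1^'n::finite^'n) = 1\<^sub>m CARD('n)"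
  by (rule eq_matI) (auto simp: toJ_def Finite_Cartesian_Product.mat_def enm_inj)

lemma det_toJ: "Determinant.det (toJ (A::'a::comm_ring_1^'n::finite^'n)) = Determinants.det A"
proof -
  let ?N = "CARD('n)"
  let ?e = "enm :: nat \<Rightarrow> 'n"
  let ?e' = "inv_into {0..<?N} ?e"
  have eb: "bij_betw ?e {0..<?N} UNIV" by (rule enm_bij)
  have eb': "bij_betw ?e' UNIV {0..<?N}" using bij_betw_inv_into[OF eb] .
  have inj: "inj_on ?e {0..<?N}" using eb by (simp add: bij_betw_def)
  have "Determinant.det (toJ A) = (\<Sum>q\<in>{q. q permutes {0..<?N}}. of_int (sign q) * (\<Prod>i = 0..<?N. A $ ?e i $ ?e (q i)))"
    unfolding det_def'[OF toJ_carrier]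
    by (intro sum.cong refl arg_cong2[where f="(*)"] prod.cong)
       (auto simp: toJ_def permutes_in_image)
  also have "\<dots> = (\<Sum>p\<in>{p. p permutes (UNIV::'n set)}. of_int (sign p) * (\<Prod>i\<in>UNIV. A $ i $ p i))"
  proof (rule sum.reindex_bij_witness[where j = "map_permutation {0..<?N} ?e" and i = "map_permutation UNIV ?e'"])
    fix q assume q: "q \<in> {q. q permutes {0..<?N}}"
    show "map_permutation UNIV ?e' (map_permutation {0..<?N} ?e q) = q"
      by (rule map_permutation_compose_inv[OF eb]) (use q inj in auto)
    show "map_permutation {0..<?N} ?e q \<in> {p. p permutes UNIV}"
      using map_permutation_permutes[OF eb] q by auto
    have "(\<Prod>i\<in>UNIV. A $ i $ map_permutation {0..<?N} ?e q i)
        = (\<Prod>k\<in>{0..<?N}. A $ ?e k $ map_permutation {0..<?N} ?e q (?e k))"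
      by (rule prod.reindex_bij_betw[OF eb, symmetric])
    also have "\<dots> = (\<Prod>k\<in>{0..<?N}. A $ ?e k $ ?e (q k))"
      by (intro prod.cong refl) (simp add: map_permutation_apply[OF inj])
    finally show "of_int (sign (map_permutation {0..<?N} ?e q)) * (\<Prod>i\<in>UNIV. A $ i $ map_permutation {0..<?N} ?e q i)
        = of_int (sign q) * (\<Prod>i = 0..<?N. A $ ?e i $ ?e (q i))"
      using sign_map_permutation[OF inj] q by auto
  next
    fix p assume p: "p \<in> {p. p permutes (UNIV::'n set)}"
    show "map_permutation {0..<?N} ?e (map_permutation UNIV ?e' p) = p"
      by (rule map_permutation_compose_inv[OF eb']) (use p eb in \<open>auto intro: bij_betw_inv_into_right\<close>)
    show "map_permutation UNIV ?e' p \<in> {q. q permutes {0..<?N}}"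
      using map_permutation_permutes[OF eb'] p by auto
  qed
  also have "\<dots> = Determinants.det A" unfolding Determinants.det_def by simp
  finally show ?thesis .
qed

lemma sylv_J:
  fixes X :: "'a::idom Matrix.mat"
  assumes X: "X \<in> carrier_mat n m" and Y: "Y \<in> carrier_mat m n"
  shows "Determinant.det (X * Y + s \<cdot>\<^sub>m 1\<^sub>m n) * s ^ m = s ^ n * Determinant.det (Y * X + s \<cdot>\<^sub>m 1\<^sub>m m)"
proof -
  define P where "P = four_block_mat (1\<^sub>m n) (- X) Y (s \<cdot>\<^sub>m 1\<^sub>m m)"
  define Q where "Q = four_block_mat (s \<cdot>\<^sub>m 1\<^sub>m n) (0\<^sub>m n m) (- Y) (1\<^sub>m m)"
  define L where "L = four_block_mat (1\<^sub>m n) (0\<^sub>m n m) (- Y) (1\<^sub>m m)"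
  have P: "P \<in> carrier_mat (n+m) (n+m)" unfolding P_def using X Y by auto
  have Q: "Q \<in> carrier_mat (n+m) (n+m)" unfolding Q_def using X Y by auto
  have L: "L \<in> carrier_mat (n+m) (n+m)" unfolding L_def using X Y by auto
  have XY: "X * Y \<in> carrier_mat n n" "Y * X \<in> carrier_mat m m" using X Y by auto
  have PQ: "P * Q = four_block_mat (X * Y + s \<cdot>\<^sub>m 1\<^sub>m n) (- X) (0\<^sub>m m n) (s \<cdot>\<^sub>m 1\<^sub>m m)"
    unfolding P_def Q_def
    apply (subst mult_four_block_mat[OF one_carrier_mat uminus_carrier_mat[OF X] Y smult_carrier_mat[OF one_carrier_mat] smult_carrier_mat[OF one_carrier_mat] zero_carrier_mat uminus_carrier_mat[OF Y] one_carrier_mat])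
    using X Y apply (auto)
    done
  have LP: "L * P = four_block_mat (1\<^sub>m n) (- X) (0\<^sub>m m n) (Y * X + s \<cdot>\<^sub>m 1\<^sub>m m)"
    unfolding P_def L_def
    apply (subst mult_four_block_mat[OF one_carrier_mat zero_carrier_mat uminus_carrier_mat[OF Y] one_carrier_mat one_carrier_mat uminus_carrier_mat[OF X] Y smult_carrier_mat[OF one_carrier_mat]])
    using X Y apply (auto)
    done
  have dQ: "Determinant.det Q = s ^ n"
    unfolding Q_def by (subst det_four_block_mat_upper_right_zero[where n=n and m=m]) (use Y in auto)
  have dL: "Determinant.det L = 1"
    unfolding L_def by (subst det_four_block_mat_upper_right_zero[where n=n and m=m]) (use Y in auto)
  have "Determinant.det (P * Q) = Determinant.det (X * Y + s \<cdot>\<^sub>m 1\<^sub>m n) * s ^ m"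
    unfolding PQ by (subst det_four_block_mat_lower_left_zero[where n=n and m=m]) (use X Y in auto)
  moreover have "Determinant.det (L * P) = Determinant.det (Y * X + s \<cdot>\<^sub>m 1\<^sub>m m)"
    unfolding LP by (subst det_four_block_mat_lower_left_zero[where n=n and m=m]) (use X Y in auto)
  ultimately show ?thesis
    using det_mult[OF P Q] det_mult[OF L P] dQ dL by (simp add: mult.commute)
qed

lemma sylv:
  fixes X :: "real^'m::finite^'n::finite" and Y :: "real^'n^'m"
  shows "Determinants.det (X ** Y + s *\<^sub>R Finite_Cartesian_Product.mat 1) * s ^ CARD('m)
       = s ^ CARD('n) * Determinants.det (Y ** X + s *\<^sub>R Finite_Cartesian_Product.mat 1)"
  unfolding det_toJ[symmetric] toJ_add toJ_mult toJ_scaleR toJ_one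
  by (rule sylv_J[OF toJ_carrier toJ_carrier])

lemma inv_props:
  assumes "invertible (M::real^'n::finite^'n)"
  shows "M ** matrix_inv M = Finite_Cartesian_Product.mat 1" "matrix_inv M ** M = Finite_Cartesian_Product.mat 1"
proof -
  have "\<exists>M'::real^'n^'n. M ** M' = Finite_Cartesian_Product.mat 1 \<and> M' ** M = Finite_Cartesian_Product.mat 1"
    using assms unfolding invertible_def .
  then have "M ** matrix_inv M = Finite_Cartesian_Product.mat 1 \<and> matrix_inv M ** M = Finite_Cartesian_Product.mat 1"
    unfolding matrix_inv_def by (rule someI_ex)
  then show "M ** matrix_inv M = Finite_Cartesian_Product.mat 1" "matrix_inv M ** M = Finite_Cartesian_Product.mat 1" by auto
qed

lemma dot_tr: "(x::real^'m::finite) \<bullet> ((M::real^'n::finite^'m) *v y) = (Finite_Cartesian_Product.transpose M *v x) \<bullet> y"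
  by (simp add: dot_lmul_matrix)

lemma matrix_add_rdistrib': "((A::real^'k::finite^'m::finite) + B) ** (C::real^'n::finite^'k) = A ** C + B ** C"
  by (simp add: matrix_matrix_mult_def vec_eq_iff sum.distrib distrib_right)

lemma matrix_diff_rdistrib': "((A::real^'k::finite^'m::finite) - B) ** (C::real^'n::finite^'k) = A ** C - B ** C"
  by (simp add: matrix_matrix_mult_def vec_eq_iff sum_subtractf left_diff_distrib)

lemma invertible_sq:
  fixes M :: "real^'n::finite^'n"
  assumes "\<And>x. M *v x = 0 \<Longrightarrow> x = 0"
  shows "invertible M"
  using assms invertible_left_inverse matrix_left_invertible_ker by blast

lemma invA:
  fixes K :: "real^'m::finite^'m" and W :: "real^'m^'n::finite"
  assumes s: "s > 0" and K: "sym_psd K"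
  shows "invertible (W ** K ** Finite_Cartesian_Product.transpose W + s *\<^sub>R Finite_Cartesian_Product.mat 1)"
proof (rule invertible_sq)
  fix x assume x: "(W ** K ** Finite_Cartesian_Product.transpose W + s *\<^sub>R Finite_Cartesian_Product.mat 1) *v x = 0"
  let ?u = "Finite_Cartesian_Product.transpose W *v x"
  have "0 = x \<bullet> ((W ** K ** Finite_Cartesian_Product.transpose W + s *\<^sub>R Finite_Cartesian_Product.mat 1) *v x)"
    using x by simp
  also have "\<dots> = x \<bullet> (W *v (K *v ?u)) + s * (x \<bullet> x)"
    by (simp add: matrix_vector_mult_add_rdistrib matrix_vector_mul_assoc scaleR_matrix_vector_assoc[symmetric] inner_add_right matrix_mul_assoc del: transpose_matrix_vector)
  also have "x \<bullet> (W *v (K *v ?u)) = ?u \<bullet> (K *v ?u)"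
    by (simp add: dot_tr)
  finally have "0 = ?u \<bullet> (K *v ?u) + s * (x \<bullet> x)" .
  moreover have "?u \<bullet> (K *v ?u) \<ge> 0" using K unfolding sym_psd_def by blast
  ultimately have "s * (x \<bullet> x) \<le> 0" by linarith
  then have "x \<bullet> x \<le> 0" using s by (simp add: mult_le_0_iff)
  then show "x = 0" by (metis antisym inner_ge_zero inner_eq_zero_iff)
qed

lemma invB:
  fixes K :: "real^'m::finite^'m" and W :: "real^'m^'n::finite"
  assumes s: "s > 0" and K: "sym_psd K"
  shows "invertible (K ** Finite_Cartesian_Product.transpose W ** W + s *\<^sub>R Finite_Cartesian_Product.mat 1)"
proof (rule invertible_sq)
  fix v assume v: "(K ** Finite_Cartesian_Product.transpose W ** W + s *\<^sub>R Finite_Cartesian_Product.mat 1) *v v = 0"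
  let ?u = "Finite_Cartesian_Product.transpose W *v (W *v v)"
  have Ku: "K *v ?u = - (s *\<^sub>R v)"
    using v by (simp add: matrix_vector_mult_add_rdistrib matrix_vector_mul_assoc scaleR_matrix_vector_assoc[symmetric] add_eq_0_iff matrix_mul_assoc del: transpose_matrix_vector)
  have uv: "?u \<bullet> v = (W *v v) \<bullet> (W *v v)"
    using dot_tr[of v "Finite_Cartesian_Product.transpose W" "W *v v"] by (simp add: inner_commute del: transpose_matrix_vector)
  have "?u \<bullet> (K *v ?u) \<ge> 0" using K unfolding sym_psd_def by blast
  also have "?u \<bullet> (K *v ?u) = - s * ((W *v v) \<bullet> (W *v v))"
    using Ku uv by (simp add: inner_commute[of _ v])
  finally have "(W *v v) \<bullet> (W *v v) \<le> 0" using s by (simp add: mult_le_0_iff)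
  then have Wv: "W *v v = 0" by (metis antisym inner_ge_zero inner_eq_zero_iff)
  then have "K *v ?u = 0" by simp
  then have "s *\<^sub>R v = 0" using Ku by simp
  then show "v = 0" using s by simp
qed


lemma det_scal_one: "Determinants.det (s *\<^sub>R Finite_Cartesian_Product.mat 1 :: real^'n::finite^'n) = s ^ CARD('n)"
  unfolding det_toJ[symmetric] toJ_scaleR toJ_one by simp

lemma sym_psd_scale: "sym_psd K \<Longrightarrow> t \<ge> 0 \<Longrightarrow> sym_psd (t *\<^sub>R K)"
  unfolding sym_psd_def
  by (simp add: transpose_scalar scaleR_matrix_vector_assoc[symmetric])

lemma detA_pos:
  fixes K :: "real^'m::finite^'m" and W :: "real^'m^'n::finite"
  assumes s: "s > 0" and K: "sym_psd K"
  shows "Determinants.det (W ** K ** Finite_Cartesian_Product.transpose W + s *\<^sub>R Finite_Cartesian_Product.mat 1) > 0"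
proof (rule ccontr)
  let ?M = "W ** K ** Finite_Cartesian_Product.transpose W"
  define f where "f t = Determinants.det (t *\<^sub>R ?M + s *\<^sub>R Finite_Cartesian_Product.mat 1)" for t
  assume "\<not> ?thesis"
  then have f1: "f 1 \<le> 0" unfolding f_def by simp
  have f0: "f 0 > 0" unfolding f_def using s by (simp add: det_scal_one)
  have nz: "f t \<noteq> 0" if "t \<ge> 0" for t
  proof -
    have "W ** (t *\<^sub>R K) ** Finite_Cartesian_Product.transpose W = t *\<^sub>R ?M"
      by (simp add: matrix_scalar_ac scalar_matrix_assoc)
    then show ?thesis
      using invA[OF s sym_psd_scale[OF K that], of W] unfolding f_def
      by (simp add: invertible_det_nz)
  qed
  have cont: "continuous_on {0..1} f"
    unfolding f_def Determinants.det_def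
    by (intro continuous_intros)
  obtain t where "0 \<le> t" "t \<le> 1" "f t = 0"
    using IVT2'[of f 1 0 0, OF f1 _ _ cont] f0 by auto
  with nz show False by blast
qed

theorem theorem1:
  fixes \<sigma> :: real
    and KG :: "real^'m^'m"
    and W :: "real^'m^'n"
    and y :: "real^'n"
    and w :: "real^'d \<Rightarrow> real^'m"
  assumes "\<sigma> > 0" and "sym_psd KG"
  shows "\<forall>x x'.
    (let KX = W ** KG ** transpose W;
         A = KX + (\<sigma>^2) *\<^sub>R mat 1;
         z = matrix_inv A *v y;
         k = (\<lambda>u. W ** KG *v w u);
         B = KG ** transpose W ** W + (\<sigma>^2) *\<^sub>R mat 1;
         zbar = matrix_inv B ** KG ** transpose W *v y;
         Cbar = (\<sigma>^2) *\<^sub>R (matrix_inv B ** KG);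
         c = real CARD('n) * ln (2 * pi) + (real CARD('n) - real CARD('m)) * ln (\<sigma>^2)
     in w x \<bullet> (KG ** transpose W *v z) = w x \<bullet> zbar
      \<and> w x \<bullet> (KG *v w x') - k x \<bullet> (matrix_inv A *v k x') = w x \<bullet> (Cbar *v w x')
      \<and> -(1/2) * (ln (det A) + y \<bullet> z + real CARD('n) * ln (2 * pi))
          = -(1/2) * (ln (det B) + (y \<bullet> (y - W *v zbar)) / \<sigma>^2 + c))"
proof (intro allI)
  fix x x' :: "real^'d"
  define s where "s = \<sigma>^2"
  have s: "s > 0" using assms(1) unfolding s_def by simp
  note K = assms(2)
  have KT: "Finite_Cartesian_Product.transpose KG = KG" using K unfolding sym_psd_def by simp
  define Wt where "Wt = Finite_Cartesian_Product.transpose W"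
  define I1 where "I1 = (Finite_Cartesian_Product.mat 1 :: real^'n^'n)"
  define I2 where "I2 = (Finite_Cartesian_Product.mat 1 :: real^'m^'m)"
  define A where "A = W ** KG ** Wt + s *\<^sub>R I1"
  define B where "B = KG ** Wt ** W + s *\<^sub>R I2"
  define Ai where "Ai = matrix_inv A"
  define Bi where "Bi = matrix_inv B"
  have iA: "A ** Ai = I1" "Ai ** A = I1"
    using inv_props[OF invA[OF s K, of W]] unfolding Ai_def A_def I1_def Wt_def by auto
  have iB: "B ** Bi = I2" "Bi ** B = I2"
    using inv_props[OF invB[OF s K, of W]] unfolding Bi_def B_def I2_def Wt_def by auto
  have push: "KG ** Wt ** A = B ** (KG ** Wt)"
    unfolding A_def B_def I1_def I2_def
    by (simp add: matrix_add_ldistrib matrix_add_rdistrib' matrix_scalar_ac scalar_matrix_assoc[symmetric] matrix_mul_assoc)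
  have push2: "Bi ** KG ** Wt = KG ** Wt ** Ai"
  proof -
    have "Bi ** KG ** Wt = Bi ** (KG ** Wt) ** (A ** Ai)"
      by (simp add: iA I1_def matrix_mul_assoc)
    also have "\<dots> = Bi ** (KG ** Wt ** A) ** Ai" by (simp add: matrix_mul_assoc)
    also have "\<dots> = (Bi ** B) ** (KG ** Wt) ** Ai" by (simp add: push matrix_mul_assoc)
    also have "\<dots> = KG ** Wt ** Ai" by (simp add: iB I2_def)
    finally show ?thesis .
  qed
  have part1: "w x \<bullet> (KG ** Wt *v (Ai *v y)) = w x \<bullet> (Bi ** KG ** Wt *v y)"
    by (simp add: push2 matrix_vector_mul_assoc)
  have Keq: "KG - KG ** Wt ** Ai ** W ** KG = s *\<^sub>R (Bi ** KG)"
  proof -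
    have "KG = Bi ** B ** KG" by (simp add: iB I2_def)
    also have "\<dots> = Bi ** (KG ** Wt ** W ** KG) + s *\<^sub>R (Bi ** KG)"
      unfolding B_def I2_def
      by (simp add: matrix_add_ldistrib matrix_add_rdistrib' matrix_scalar_ac scalar_matrix_assoc[symmetric] matrix_mul_assoc)
    also have "Bi ** (KG ** Wt ** W ** KG) = KG ** Wt ** Ai ** W ** KG"
      using push2 by (simp add: matrix_mul_assoc)
    finally have "KG = KG ** Wt ** Ai ** W ** KG + s *\<^sub>R (Bi ** KG)" .
    then show ?thesis by (metis add_diff_cancel_left')
  qed
  have part2: "w x \<bullet> (KG *v w x') - (W ** KG *v w x) \<bullet> (Ai *v (W ** KG *v w x')) = w x \<bullet> ((s *\<^sub>R (Bi ** KG)) *v w x')"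
  proof -
    have "(W ** KG *v w x) \<bullet> (Ai *v (W ** KG *v w x')) = w x \<bullet> ((KG ** Wt ** Ai ** W ** KG) *v w x')"
      using dot_tr[of "Ai *v (W ** KG *v w x')" "W ** KG" "w x"]
      by (simp add: inner_commute matrix_transpose_mul KT Wt_def matrix_vector_mul_assoc matrix_mul_assoc del: transpose_matrix_vector)
    then show ?thesis
      by (simp add: Keq[symmetric] matrix_vector_mult_diff_rdistrib inner_diff_right)
  qed
  have Wzbar: "y - W *v (Bi ** KG ** Wt *v y) = s *\<^sub>R (Ai *v y)"
  proof -
    have "W ** (Bi ** KG ** Wt) = W ** (KG ** Wt ** Ai)"
      by (simp only: push2)
    also have "\<dots> = (W ** KG ** Wt) ** Ai" by (simp only: matrix_mul_assoc)
    also have "W ** KG ** Wt = A - s *\<^sub>R I1" by (simp add: A_def)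
    also have "(A - s *\<^sub>R I1) ** Ai = A ** Ai - (s *\<^sub>R I1) ** Ai"
      by (rule matrix_diff_rdistrib')
    also have "\<dots> = I1 - s *\<^sub>R Ai"
      by (simp add: iA I1_def scalar_matrix_assoc[symmetric])
    finally have "W *v (Bi ** KG ** Wt *v y) = y - s *\<^sub>R (Ai *v y)"
      by (simp add: matrix_vector_mul_assoc I1_def matrix_vector_mult_diff_rdistrib scaleR_matrix_vector_assoc)
    then show ?thesis by simp
  qed
  have part3a: "(y \<bullet> (y - W *v (Bi ** KG ** Wt *v y))) / s = y \<bullet> (Ai *v y)"
    using s by (simp add: Wzbar)
  have dA: "Determinants.det A > 0"
    using detA_pos[OF s K, of W] unfolding A_def Wt_def I1_def .
  have sy: "Determinants.det A * s ^ CARD('m) = s ^ CARD('n) * Determinants.det B"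
    using sylv[of W "KG ** Wt" s] unfolding A_def B_def I1_def I2_def by (simp add: matrix_mul_assoc)
  have dB: "Determinants.det B > 0"
  proof -
    have "0 < Determinants.det A * s ^ CARD('m)" using dA s by simp
    then have "0 < s ^ CARD('n) * Determinants.det B" by (simp only: sy)
    then show ?thesis using s by (simp add: zero_less_mult_iff)
  qed
  have "ln (Determinants.det A) + real CARD('m) * ln s = real CARD('n) * ln s + ln (Determinants.det B)"
    using arg_cong[OF sy, of ln] dA dB s by (simp add: ln_mult ln_realpow)
  then have part3b: "ln (Determinants.det A) = ln (Determinants.det B) + (real CARD('n) - real CARD('m)) * ln s"
    by (simp add: algebra_simps)
  show "let KX = W ** KG ** Finite_Cartesian_Product.transpose W;
         A = KX + (\<sigma>^2) *\<^sub>R Finite_Cartesian_Product.mat 1;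
         z = matrix_inv A *v y;
         k = (\<lambda>u. W ** KG *v w u);
         B = KG ** Finite_Cartesian_Product.transpose W ** W + (\<sigma>^2) *\<^sub>R Finite_Cartesian_Product.mat 1;
         zbar = matrix_inv B ** KG ** Finite_Cartesian_Product.transpose W *v y;
         Cbar = (\<sigma>^2) *\<^sub>R (matrix_inv B ** KG);
         c = real CARD('n) * ln (2 * pi) + (real CARD('n) - real CARD('m)) * ln (\<sigma>^2)
     in w x \<bullet> (KG ** Finite_Cartesian_Product.transpose W *v z) = w x \<bullet> zbar
      \<and> w x \<bullet> (KG *v w x') - k x \<bullet> (matrix_inv A *v k x') = w x \<bullet> (Cbar *v w x')
      \<and> -(1/2) * (ln (Determinants.det A) + y \<bullet> z + real CARD('n) * ln (2 * pi))
          = -(1/2) * (ln (Determinants.det B) + (y \<bullet> (y - W *v zbar)) / \<sigma>^2 + c)"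
    unfolding Let_def s_def[symmetric] Wt_def[symmetric] I1_def[symmetric] I2_def[symmetric]
      A_def[symmetric] B_def[symmetric] Ai_def[symmetric] Bi_def[symmetric]
    using part1 part2 part3a part3b by (simp add: algebra_simps)
qed

end
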